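(* Let $f\in\mathcal{M}_S$ and let $D$ be an invariant rotation domain of $f$ (i.e. $f(D)\subseteq D$). If $f$ is univalent in a neighbourhood of $D$, then there is no repelling fixed point of $f$ on the boundary of $D$.
   Context: A general transcendental meromorphic function is a meromorphic function $f:\mathbb{C}\to\widehat{\mathbb{C}}$ whose only essential singularity is at $\infty$ and which has either at least two poles or exactly one pole that is not an omitted value. An omitted value is $b\in\mathbb{C}$ with $f(z)\neq b$ for all $z$. A Baker omitted value (bov) is an omitted value $b$ for which there is a disk $D'$ centred at $b$ such that each component of the boundary of $f^{-1}(D')$ is bounded; it is stable if all iterates $f^n$ are defined (analytic) in a neighbourhood of $b$. $\mathcal{M}_S$ denotes the class of general transcendental meromorphic functions having a stable bov. An invariant Fatou component $D$ is a rotation domain if there is a conformal map $\phi$ from $D$ onto an annulus $\{1<|z|<r\}$ or onto the unit disk with $\phi\circ f\circ\phi^{-1}(z)=e^{2\pi i\theta}z$ for some irrational $\theta$. A fixed point $z_0$ is repelling if $|f'(z_0)|>1$. *)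

theory Defs
  imports "HOL-Complex_Analysis.Complex_Analysis"
begin

text \<open>A meromorphic function on the plane is represented by a function
  complex => complex that is (nicely) meromorphic on UNIV; its value at a pole
  is a normalised junk value (0) and is never used below.\<close>

definition poles :: "(complex \<Rightarrow> complex) \<Rightarrow> complex set" where
  "poles f = {z. is_pole f z}"

definition omitted_value :: "(complex \<Rightarrow> complex) \<Rightarrow> complex \<Rightarrow> bool" where
  "omitted_value f b \<longleftrightarrow> (\<forall>z. z \<notin> poles f \<longrightarrow> f z \<noteq> b)"

definition ess_sing_at_infinity :: "(complex \<Rightarrow> complex) \<Rightarrow> bool" where
  "ess_sing_at_infinity f \<longleftrightarrow>
     \<not> (\<exists>c. (f \<longlongrightarrow> c) at_infinity) \<and> \<not> filterlim f at_infinity at_infinity"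

definition general_transcendental_meromorphic :: "(complex \<Rightarrow> complex) \<Rightarrow> bool" where
  "general_transcendental_meromorphic f \<longleftrightarrow>
     f nicely_meromorphic_on UNIV \<and> ess_sing_at_infinity f \<and>
     ((\<exists>p q. p \<in> poles f \<and> q \<in> poles f \<and> p \<noteq> q) \<or>
      (\<exists>p. poles f = {p} \<and> \<not> omitted_value f p))"

definition preimage_mero :: "(complex \<Rightarrow> complex) \<Rightarrow> complex set \<Rightarrow> complex set" where
  "preimage_mero f S = {z. z \<notin> poles f \<and> f z \<in> S}"

definition baker_omitted_value :: "(complex \<Rightarrow> complex) \<Rightarrow> complex \<Rightarrow> bool" where
  "baker_omitted_value f b \<longleftrightarrow> omitted_value f b \<and>
     (\<exists>r>0. \<forall>x \<in> frontier (preimage_mero f (ball b r)).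
              bounded (connected_component_set (frontier (preimage_mero f (ball b r))) x))"

definition iterate_defined_on :: "(complex \<Rightarrow> complex) \<Rightarrow> nat \<Rightarrow> complex set \<Rightarrow> bool" where
  "iterate_defined_on f n U \<longleftrightarrow> (\<forall>k<n. \<forall>z\<in>U. (f ^^ k) z \<notin> poles f)"

definition stable_bov :: "(complex \<Rightarrow> complex) \<Rightarrow> complex \<Rightarrow> bool" where
  "stable_bov f b \<longleftrightarrow> baker_omitted_value f b \<and>
     (\<forall>n. \<exists>U. open U \<and> b \<in> U \<and> iterate_defined_on f n U)"

definition class_MS :: "(complex \<Rightarrow> complex) \<Rightarrow> bool" where
  "class_MS f \<longleftrightarrow> general_transcendental_meromorphic f \<and> (\<exists>b. stable_bov f b)"

text \<open>Chordal (spherical) metric restricted to finite points.\<close>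
definition chordal :: "complex \<Rightarrow> complex \<Rightarrow> real" where
  "chordal a b = 2 * norm (a - b) / (sqrt (1 + (norm a)\<^sup>2) * sqrt (1 + (norm b)\<^sup>2))"

text \<open>Normality of the family of iterates on U (in the spherical metric):
  every sequence of iterates has a subsequence that is uniformly Cauchy in the
  chordal metric on each compact subset of U (equivalently, by completeness
  of the Riemann sphere, converges locally uniformly in the chordal metric).\<close>
definition iterates_normal_on :: "(complex \<Rightarrow> complex) \<Rightarrow> complex set \<Rightarrow> bool" where
  "iterates_normal_on f U \<longleftrightarrow>
     (\<forall>m::nat \<Rightarrow> nat. \<exists>r::nat \<Rightarrow> nat. strict_mono r \<and>
        (\<forall>K. compact K \<and> K \<subseteq> U \<longrightarrow>
           (\<forall>e>0. \<exists>N. \<forall>i\<ge>N. \<forall>j\<ge>N. \<forall>z\<in>K.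
              chordal ((f ^^ m (r i)) z) ((f ^^ m (r j)) z) < e)))"

definition fatou_set :: "(complex \<Rightarrow> complex) \<Rightarrow> complex set" where
  "fatou_set f = {z. \<exists>U. open U \<and> z \<in> U \<and> (\<forall>n. iterate_defined_on f n U) \<and>
                          iterates_normal_on f U}"

definition fatou_component :: "(complex \<Rightarrow> complex) \<Rightarrow> complex set \<Rightarrow> bool" where
  "fatou_component f D \<longleftrightarrow> (\<exists>z \<in> fatou_set f. D = connected_component_set (fatou_set f) z)"

definition invariant_rotation_domain :: "(complex \<Rightarrow> complex) \<Rightarrow> complex set \<Rightarrow> bool" where
  "invariant_rotation_domain f D \<longleftrightarrow> fatou_component f D \<and> f ` D \<subseteq> D \<and>
     (\<exists>\<phi> (\<theta>::real). \<phi> holomorphic_on D \<and> inj_on \<phi> D \<and>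
        ((\<exists>r>1. \<phi> ` D = {w. 1 < norm w \<and> norm w < r}) \<or> \<phi> ` D = ball 0 1) \<and>
        \<theta> \<notin> \<rat> \<and>
        (\<forall>z\<in>D. \<phi> (f z) = exp (2 * pi * \<i> * complex_of_real \<theta>) * \<phi> z))"

text \<open>Univalence of a meromorphic f on U: injective as a map into the Riemann
  sphere, i.e. injective off the poles and at most one pole in U.\<close>
definition univalent_on :: "(complex \<Rightarrow> complex) \<Rightarrow> complex set \<Rightarrow> bool" where
  "univalent_on f U \<longleftrightarrow> inj_on f (U - poles f) \<and>
     (\<forall>p\<in>U \<inter> poles f. \<forall>q\<in>U \<inter> poles f. p = q)"

definition repelling_fixed_point :: "(complex \<Rightarrow> complex) \<Rightarrow> complex \<Rightarrow> bool" where
  "repelling_fixed_point f z0 \<longleftrightarrow> z0 \<notin> poles f \<and> f z0 = z0 \<and> norm (deriv f z0) > 1"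

end

theory Submission
  imports Defs
begin

lemma fatou_open: "open (fatou_set f)"
proof (subst open_subopen, intro ballI)
  fix x assume "x \<in> fatou_set f"
  then obtain U where U: "open U" "x \<in> U" "\<forall>n. iterate_defined_on f n U" "iterates_normal_on f U"
    unfolding fatou_set_def by blast
  have "U \<subseteq> fatou_set f"
  proof
    fix y assume "y \<in> U" then show "y \<in> fatou_set f"
      unfolding fatou_set_def using U by blast
  qed
  then show "\<exists>T. open T \<and> x \<in> T \<and> T \<subseteq> fatou_set f" using U by blast
qed

lemma fatou_no_poles: "z \<in> fatou_set f \<Longrightarrow> z \<notin> poles f"
proof -
  assume "z \<in> fatou_set f"
  then obtain U where U: "z \<in> U" "iterate_defined_on f 1 U"
    unfolding fatou_set_def by blast
  then have "(f ^^ 0) z \<notin> poles f" unfolding iterate_defined_on_def by blast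
  then show ?thesis by simp
qed
theorem corollary1p2:
  fixes f :: "complex \<Rightarrow> complex" and D :: "complex set"
  assumes "class_MS f"
    and "invariant_rotation_domain f D"
    and "\<exists>U. open U \<and> closure D \<subseteq> U \<and> univalent_on f U"
  shows "\<not> (\<exists>z0 \<in> frontier D. repelling_fixed_point f z0)"
proof
  assume "\<exists>z0 \<in> frontier D. repelling_fixed_point f z0"
  then obtain z0 where z0F: "z0 \<in> frontier D" and rep: "repelling_fixed_point f z0" by blast
  have z0np: "z0 \<notin> poles f" and fz0: "f z0 = z0" and lam: "norm (deriv f z0) > 1"
    using rep by (auto simp: repelling_fixed_point_def)
  obtain U where "open U" and clU: "closure D \<subseteq> U" and univ: "univalent_on f U"
    using assms(3) by blast
  have injU: "inj_on f (U - poles f)" using univ by (simp add: univalent_on_def)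
  obtain z where "z \<in> fatou_set f" and Ddef: "D = connected_component_set (fatou_set f) z"
    using assms(2) by (auto simp: invariant_rotation_domain_def fatou_component_def)
  have openD: "open D" using Ddef fatou_open open_connected_component by blast
  have DF: "D \<subseteq> fatou_set f" using Ddef connected_component_subset by blast
  have Dnp: "\<And>x. x \<in> D \<Longrightarrow> x \<notin> poles f" using DF fatou_no_poles by blast
  have z0nD: "z0 \<notin> D" using z0F openD by (simp add: frontier_def interior_open)
  have z0cl: "z0 \<in> closure D" using z0F by (simp add: frontier_def)
  have fD: "f ` D \<subseteq> D" using assms(2) by (simp add: invariant_rotation_domain_def)
  obtain \<phi> and \<theta>::real where phol: "\<phi> holomorphic_on D" and pinj: "inj_on \<phi> D"
     and pim: "(\<exists>r>1. \<phi> ` D = {w. 1 < norm w \<and> norm w < r}) \<or> \<phi> ` D = ball 0 1"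
     and conj: "\<forall>z\<in>D. \<phi> (f z) = exp (2 * pi * \<i> * complex_of_real \<theta>) * \<phi> z"
    using assms(2) unfolding invariant_rotation_domain_def by blast
  define a where "a = exp (2 * pi * \<i> * complex_of_real \<theta>)"
  have na: "norm a = 1" unfolding a_def by (simp add: norm_exp_eq_Re)
  have a0: "a \<noteq> 0" unfolding a_def by simp
  have pimn: "v \<in> \<phi> ` D" if "w \<in> \<phi> ` D" "norm v = norm w" for w v
    using pim
  proof (elim disjE exE conjE)
    fix r assume eq: "\<phi> ` D = {w. 1 < norm w \<and> norm w < r}"
    show ?thesis using that unfolding eq by simp
  next
    assume eq: "\<phi> ` D = ball 0 1"
    show ?thesis using that unfolding eq by simp
  qed
  obtain g where ghol: "g holomorphic_on (\<phi> ` D)" and gphi: "\<And>z. z \<in> D \<Longrightarrow> g (\<phi> z) = z"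
    using holomorphic_has_inverse[OF phol openD pinj] by metis
  have "f nicely_meromorphic_on UNIV"
    using assms(1) by (simp add: class_MS_def general_transcendental_meromorphic_def)
  then have "f analytic_on {z0}"
    using z0np nicely_meromorphic_on_imp_analytic_at by (auto simp: poles_def)
  then obtain r0 where "r0 > 0" and hol0: "f holomorphic_on ball z0 r0"
    by (auto simp: analytic_on_def)
  have "(f has_field_derivative deriv f z0) (at z0)"
    using \<open>f analytic_on {z0}\<close> analytic_at_imp_isCont
    by (simp add: analytic_on_imp_differentiable_at field_differentiable_derivI)
  then have "((\<lambda>y. (f y - f z0) / (y - z0)) \<longlongrightarrow> deriv f z0) (at z0)"
    by (simp add: has_field_derivative_iff)
  then have "((\<lambda>y. norm ((f y - f z0) / (y - z0))) \<longlongrightarrow> norm (deriv f z0)) (at z0)"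
    by (rule tendsto_norm)
  then have "\<forall>\<^sub>F y in at z0. norm ((f y - f z0) / (y - z0)) > 1"
    using lam order_tendstoD(1) by blast
  then obtain r1 where "r1 > 0" and r1: "\<And>y. y \<noteq> z0 \<Longrightarrow> dist y z0 < r1 \<Longrightarrow> norm ((f y - f z0) / (y - z0)) > 1"
    by (auto simp: eventually_at)
  have "z0 \<in> U" using clU z0cl by blast
  then obtain r2 where "r2 > 0" and "ball z0 r2 \<subseteq> U" using \<open>open U\<close> open_contains_ball by blast
  obtain r3 where "r3 > 0" and r3: "ball z0 r3 \<inter> poles f = {}"
  proof -
    have "open (ball z0 r0)" by simp
    have "\<And>x. x \<in> ball z0 r0 \<Longrightarrow> \<not> is_pole f x"
    proof -
      fix x assume "x \<in> ball z0 r0"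
      then have "f analytic_on {x}" using hol0 analytic_on_open[of "ball z0 r0" f]
        by (metis analytic_on_subset empty_subsetI insert_subset open_ball)
      then show "\<not> is_pole f x"
        using analytic_at_imp_no_pole by blast
    qed
    then have "ball z0 r0 \<inter> poles f = {}" by (auto simp: poles_def)
    then show ?thesis using that[of r0] \<open>r0 > 0\<close> by blast
  qed
  define \<delta> where "\<delta> = min (min r0 r1) (min r2 r3)"
  have "\<delta> > 0" using \<open>r0>0\<close> \<open>r1>0\<close> \<open>r2>0\<close> \<open>r3>0\<close> by (simp add: \<delta>_def)
  have Bsub: "ball z0 \<delta> \<subseteq> U - poles f"
    using \<open>ball z0 r2 \<subseteq> U\<close> r3 by (auto simp: \<delta>_def)
  have exp: "\<And>y. y \<in> ball z0 \<delta> \<Longrightarrow> y \<noteq> z0 \<Longrightarrow> norm (f y - z0) > norm (y - z0)"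
  proof -
    fix y assume "y \<in> ball z0 \<delta>" "y \<noteq> z0"
    then have "norm ((f y - z0) / (y - z0)) > 1" using r1[of y] fz0
      by (auto simp: \<delta>_def dist_commute)
    then show "norm (f y - z0) > norm (y - z0)"
      using \<open>y \<noteq> z0\<close> by (simp add: norm_divide divide_simps split: if_splits)
  qed
  have holB: "f holomorphic_on ball z0 \<delta>"
    using hol0 by (rule holomorphic_on_subset) (auto simp: \<delta>_def)
  have nc: "\<not> f constant_on ball z0 \<delta>"
  proof
    assume "f constant_on ball z0 \<delta>"
    then obtain c where c: "\<And>x. x \<in> ball z0 \<delta> \<Longrightarrow> f x = c" by (auto simp: constant_on_def)
    have "c = z0" using c[of z0] fz0 \<open>\<delta>>0\<close> by simp
    define y where "y = z0 + of_real (\<delta>/2)"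
    have "y \<in> ball z0 \<delta>" "y \<noteq> z0" using \<open>\<delta>>0\<close> by (auto simp: y_def dist_norm)
    then show False using exp[of y] c[of y] \<open>c = z0\<close> by simp
  qed
  have "open (f ` ball z0 \<delta>)"
    by (rule open_mapping_thm[OF holB]) (use nc in auto)
  moreover have "z0 \<in> f ` ball z0 \<delta>" using fz0 \<open>\<delta>>0\<close> by (metis centre_in_ball image_eqI)
  ultimately have "\<exists>e>0. ball z0 e \<subseteq> f ` ball z0 \<delta>"
    using open_contains_ball_eq by blast
  then obtain \<epsilon> where "\<epsilon> > 0" and epsB: "ball z0 \<epsilon> \<subseteq> f ` ball z0 \<delta>"
    by blast
  have "\<exists>y\<in>D. dist y z0 < \<epsilon>"
    using z0cl \<open>\<epsilon>>0\<close> unfolding closure_approachable by blast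
  then obtain w where "w \<in> D" and wz0: "dist w z0 < \<epsilon>" by blast
  have wz: "dist z0 w < \<epsilon>" using wz0 by (simp add: dist_commute)
  define K where "K = sphere (0::complex) (norm (\<phi> w))"
  have KphiD: "K \<subseteq> \<phi> ` D" using pimn[of "\<phi> w"] \<open>w \<in> D\<close> by (auto simp: K_def)
  have "compact K" "K \<noteq> {}" unfolding K_def by simp_all
  have "continuous_on K (\<lambda>\<zeta>. norm (g \<zeta> - z0))"
  proof -
    have "continuous_on (\<phi> ` D) g" using ghol by (rule holomorphic_on_imp_continuous_on)
    then have "continuous_on K g" using KphiD by (rule continuous_on_subset)
    then show ?thesis by (intro continuous_intros)
  qed
  then obtain \<zeta>0 where "\<zeta>0 \<in> K" and mn: "\<And>\<zeta>. \<zeta> \<in> K \<Longrightarrow> norm (g \<zeta>0 - z0) \<le> norm (g \<zeta> - z0)"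
    using continuous_attains_inf[OF \<open>compact K\<close> \<open>K \<noteq> {}\<close>] by blast
  define u where "u = g \<zeta>0"
  have "\<zeta>0 \<in> \<phi> ` D" using KphiD \<open>\<zeta>0 \<in> K\<close> by blast
  then obtain q where "q \<in> D" and "\<zeta>0 = \<phi> q" by blast
  have "u = q" using gphi \<open>q\<in>D\<close> by (simp add: u_def \<open>\<zeta>0 = \<phi> q\<close>)
  have "\<phi> w \<in> K" by (simp add: K_def)
  have "norm (u - z0) \<le> norm (w - z0)"
    using mn[OF \<open>\<phi> w \<in> K\<close>] gphi[OF \<open>w \<in> D\<close>] by (simp add: u_def)
  then have "u \<in> ball z0 \<epsilon>" using wz by (simp add: dist_norm norm_minus_commute)
  then obtain x where "x \<in> ball z0 \<delta>" and fx: "f x = u" using epsB by blast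
  define \<zeta>1 where "\<zeta>1 = \<zeta>0 / a"
  have "\<zeta>1 \<in> K" using \<open>\<zeta>0 \<in> K\<close> na by (simp add: K_def \<zeta>1_def norm_divide)
  then obtain p where "p \<in> D" and "\<zeta>1 = \<phi> p" using KphiD by blast
  have "g \<zeta>1 = p" using gphi \<open>p \<in> D\<close> \<open>\<zeta>1 = \<phi> p\<close> by simp
  have "\<phi> (f p) = a * \<phi> p" using conj \<open>p \<in> D\<close> by (simp add: a_def)
  also have "\<dots> = a * (\<phi> q / a)" using \<open>\<zeta>1 = \<phi> p\<close> \<open>\<zeta>0 = \<phi> q\<close> by (simp add: \<zeta>1_def)
  also have "\<dots> = \<phi> q" using a0 by simp
  finally have "\<phi> (f p) = \<phi> q" .
  moreover have "f p \<in> D" using fD \<open>p \<in> D\<close> by blast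
  ultimately have "f p = q" using inj_onD[OF pinj] \<open>q \<in> D\<close> by blast
  have "p \<in> U - poles f" using \<open>p \<in> D\<close> Dnp clU closure_subset by blast
  have "x \<in> U - poles f" using Bsub \<open>x \<in> ball z0 \<delta>\<close> by blast
  have "x = p" using injU \<open>p \<in> U - poles f\<close> \<open>x \<in> U - poles f\<close> fx \<open>f p = q\<close> \<open>u = q\<close>
    using inj_onD[OF injU] by metis
  have "x \<noteq> z0" using \<open>x = p\<close> \<open>p \<in> D\<close> z0nD by blast
  have "norm (u - z0) > norm (x - z0)" using exp[OF \<open>x \<in> ball z0 \<delta>\<close> \<open>x \<noteq> z0\<close>] fx by simp
  moreover have "norm (u - z0) \<le> norm (x - z0)"
    using mn[OF \<open>\<zeta>1 \<in> K\<close>] \<open>g \<zeta>1 = p\<close> \<open>x = p\<close> by (simp add: u_def)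
  ultimately show False by simp
qed

end
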